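(* Let $a\neq0$ be a real constant and $\phi(x,z)=(x,\,f(x)g(z+ax),\,z)$ an affine factorable surface of the second kind in $G_3^1$ with $1-(fg')^2>0$. If its Gaussian curvature is a non-zero constant $K_o$, then the surface takes the form $y(x,z)=\left(g_o(z+ax)+\lambda_2\right)\left(\pm\frac{1}{g_o}\tanh\left[\sqrt{K_o}\,x\mp g_o\lambda_1\right]\right)$ for some constants $g_o\in\mathbb{R}\setminus\{0\}$ and $\lambda_1,\lambda_2\in\mathbb{R}$.
   Context: The pseudo-Galilean space $G_3^1$ is $\mathbb{R}^3$ with the scalar product $\langle X,Y\rangle=x_1y_1$ if $x_1\neq0$ or $y_1\neq0$, and $\langle X,Y\rangle=x_2y_2-x_3y_3$ if $x_1=y_1=0$. An affine factorable surface of the second kind is $\phi(x,z)=(x,f(x)g(z+ax),z)$ with $a\neq0$ constant. Here $f'$ denotes $df/dx$ and $g',g''$ denote derivatives of $g$ with respect to its argument $v=z+ax$. The Gaussian curvature is taken to be $K=\dfrac{f'^2g'^2-f''f\,g''g}{(1-(fg')^2)^2}$. *)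

theory Defs
  imports "HOL-Analysis.Analysis"
begin

text \<open>Gaussian curvature of the affine factorable surface of the second kind
  phi(x,z) = (x, f(x) g(z + a x), z) in the pseudo-Galilean space, at the point (x,z),
  with v = z + a x.\<close>
definition gauss_curv_AF2 ::
  "(real \<Rightarrow> real) \<Rightarrow> (real \<Rightarrow> real) \<Rightarrow> real \<Rightarrow> real \<Rightarrow> real \<Rightarrow> real" where
  "gauss_curv_AF2 f g a x z =
     (let v = z + a * x in
      ((deriv f x)\<^sup>2 * (deriv g v)\<^sup>2 - deriv (deriv f) x * f x * deriv (deriv g) v * g v)
      / (1 - (f x * deriv g v)\<^sup>2)\<^sup>2)"

end

theory Submission
  imports Defs
begin

lemma tanh_artanh_real:
  fixes y :: real assumes "\<bar>y\<bar> < 1" shows "tanh (artanh y) = y"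
proof -
  define q where "q = (1+y)/(1-y)"
  have q: "q > 0" using assms unfolding q_def by (auto simp: abs_less_iff)
  have "exp (- 2 * artanh y) = 1/q"
    by (simp add: artanh_def q_def[symmetric] exp_minus q inverse_eq_divide)
  hence "tanh (artanh y) = (1 - 1/q)/(1+1/q)" by (simp add: tanh_real_altdef)
  also have "\<dots> = y" using assms unfolding q_def by (auto simp: field_simps abs_less_iff)
  finally show ?thesis .
qed

lemma sq_const_imp_const:
  fixes \<phi> :: "real \<Rightarrow> real"
  assumes c: "continuous_on UNIV \<phi>" and sq: "\<And>x. (\<phi> x)\<^sup>2 = k"
  shows "\<phi> x = \<phi> y"
proof (rule ccontr)
  assume ne: "\<phi> x \<noteq> \<phi> y"
  have "(\<phi> x)\<^sup>2 = (\<phi> y)\<^sup>2" using sq by simp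
  hence opp: "\<phi> x = - \<phi> y" using ne by (metis power2_eq_iff)
  hence nz: "\<phi> x \<noteq> 0" using ne by auto
  have "\<exists>t. \<phi> t = 0"
  proof (cases "x \<le> y")
    case True
    have cc: "continuous_on {x..y} \<phi>" using c continuous_on_subset by blast
    show ?thesis
    proof (cases "\<phi> x \<le> 0")
      case True
      then show ?thesis using IVT'[of \<phi> x 0 y, OF _ _ \<open>x\<le>y\<close> cc] opp by auto
    next
      case False
      then show ?thesis using IVT2'[of \<phi> y 0 x, OF _ _ \<open>x\<le>y\<close> cc] opp by auto
    qed
  next
    case False
    hence le: "y \<le> x" by simp
    have cc: "continuous_on {y..x} \<phi>" using c continuous_on_subset by blast
    show ?thesis
    proof (cases "\<phi> y \<le> 0")
      case True
      then show ?thesis using IVT'[of \<phi> y 0 x, OF _ _ le cc] opp by auto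
    next
      case False
      then show ?thesis using IVT2'[of \<phi> x 0 y, OF _ _ le cc] opp by auto
    qed
  qed
  then obtain t where "\<phi> t = 0" by blast
  hence "k = 0" using sq[of t] by simp
  hence "\<phi> x = 0" using sq[of x] by simp
  with nz show False by simp
qed

lemma quad_zero:
  fixes p q r t1 t2 t3 :: real
  assumes "t1 \<noteq> t2" "t1 \<noteq> t3" "t2 \<noteq> t3"
    and "p + q*t1 + r*t1^2 = 0" "p + q*t2 + r*t2^2 = 0" "p + q*t3 + r*t3^2 = 0"
  shows "p = 0 \<and> q = 0 \<and> r = 0"
proof -
  have a: "(t1 - t2) * (q + r*(t1+t2)) = 0" using assms(4,5) by (simp add: algebra_simps power2_eq_square)
  have b: "(t1 - t3) * (q + r*(t1+t3)) = 0" using assms(4,6) by (simp add: algebra_simps power2_eq_square)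
  have a': "q + r*(t1+t2) = 0" using a assms(1) by simp
  have b': "q + r*(t1+t3) = 0" using b assms(2) by simp
  have "r * (t2 - t3) = (q + r*(t1+t2)) - (q + r*(t1+t3))" by (simp add: algebra_simps)
  hence "r * (t2 - t3) = 0" using a' b' by simp
  hence r: "r = 0" using assms(3) by simp
  hence "q = 0" using a' by simp
  with r show ?thesis using assms(4) by simp
qed

lemma ivt_mid:
  fixes \<phi> :: "real \<Rightarrow> real"
  assumes c: "continuous_on UNIV \<phi>"
  shows "\<exists>t. \<phi> t = (\<phi> x + \<phi> y)/2"
proof (cases "x \<le> y")
  case True
  have cc: "continuous_on {x..y} \<phi>" using c continuous_on_subset by blast
  show ?thesis
  proof (cases "\<phi> x \<le> \<phi> y")
    case True
    then show ?thesis using IVT'[of \<phi> x "(\<phi> x + \<phi> y)/2" y, OF _ _ \<open>x\<le>y\<close> cc] by auto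
  next
    case False
    then show ?thesis using IVT2'[of \<phi> y "(\<phi> x + \<phi> y)/2" x, OF _ _ \<open>x\<le>y\<close> cc] by auto
  qed
next
  case False
  hence le: "y \<le> x" by simp
  have cc: "continuous_on {y..x} \<phi>" using c continuous_on_subset by blast
  show ?thesis
  proof (cases "\<phi> y \<le> \<phi> x")
    case True
    then show ?thesis using IVT'[of \<phi> y "(\<phi> x + \<phi> y)/2" x, OF _ _ le cc] by auto
  next
    case False
    then show ?thesis using IVT2'[of \<phi> x "(\<phi> x + \<phi> y)/2" y, OF _ _ le cc] by auto
  qed
qed

theorem mainTheorem3:
  fixes f g :: "real \<Rightarrow> real" and a K0 :: real
  assumes "a \<noteq> 0"
    and "\<And>x. f differentiable at x" and "\<And>x. deriv f differentiable at x"
    and "\<And>v. g differentiable at v" and "\<And>v. deriv g differentiable at v"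
    and "\<And>x z. 1 - (f x * deriv g (z + a * x))\<^sup>2 > 0"
    and "K0 \<noteq> 0"
    and "\<And>x z. gauss_curv_AF2 f g a x z = K0"
  shows "\<exists>g0 lam1 lam2 s. g0 \<noteq> 0 \<and> (s = 1 \<or> s = -1) \<and>
           (\<forall>x z. f x * g (z + a * x) =
              (g0 * (z + a * x) + lam2) * (s * (1 / g0) * tanh (sqrt K0 * x - s * g0 * lam1)))"
proof -
  have Df: "\<And>x. (f has_real_derivative deriv f x) (at x)"
    using assms(2) DERIV_deriv_iff_real_differentiable by blast
  have Ddf: "\<And>x. (deriv f has_real_derivative deriv (deriv f) x) (at x)"
    using assms(3) DERIV_deriv_iff_real_differentiable by blast
  have Dg: "\<And>x. (g has_real_derivative deriv g x) (at x)"
    using assms(4) DERIV_deriv_iff_real_differentiable by blast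
  have Ddg: "\<And>x. (deriv g has_real_derivative deriv (deriv g) x) (at x)"
    using assms(5) DERIV_deriv_iff_real_differentiable by blast
  have cf: "continuous_on UNIV f"
    by (rule continuous_at_imp_continuous_on) (use Df DERIV_isCont in blast)
  have cdf: "continuous_on UNIV (deriv f)"
    by (rule continuous_at_imp_continuous_on) (use Ddf DERIV_isCont in blast)
  have cdg: "continuous_on UNIV (deriv g)"
    by (rule continuous_at_imp_continuous_on) (use Ddg DERIV_isCont in blast)
  have pos: "\<And>x v. 1 - (f x * deriv g v)\<^sup>2 > 0"
    using assms(6) by (metis diff_add_cancel)
  have key: "\<And>x v. (deriv f x)\<^sup>2 * (deriv g v)\<^sup>2 - deriv (deriv f) x * f x * deriv (deriv g) v * g v
      = K0 * (1 - (f x * deriv g v)\<^sup>2)\<^sup>2"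
  proof -
    fix x v
    have p: "1 - (f x * deriv g v)\<^sup>2 > 0" by (rule pos)
    have "gauss_curv_AF2 f g a x (v - a*x) = K0" by (rule assms(8))
    hence "((deriv f x)\<^sup>2 * (deriv g v)\<^sup>2 - deriv (deriv f) x * f x * deriv (deriv g) v * g v)
      / (1 - (f x * deriv g v)\<^sup>2)\<^sup>2 = K0" by (simp add: gauss_curv_AF2_def Let_def)
    then show "(deriv f x)\<^sup>2 * (deriv g v)\<^sup>2 - deriv (deriv f) x * f x * deriv (deriv g) v * g v
      = K0 * (1 - (f x * deriv g v)\<^sup>2)\<^sup>2" using p by (simp add: field_simps)
  qed
  define G1 where "G1 v = (deriv g v)\<^sup>2" for v
  define G2 where "G2 v = deriv (deriv g) v * g v" for v
  define A where "A x = (deriv f x)\<^sup>2" for x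
  define B where "B x = deriv (deriv f) x * f x" for x
  define u where "u x = (f x)\<^sup>2" for x
  have key2: "\<And>x v. A x * G1 v - B x * G2 v = K0 * (1 - u x * G1 v)\<^sup>2"
    using key unfolding A_def B_def G1_def G2_def u_def by (simp add: power_mult_distrib algebra_simps)
  have cG1: "continuous_on UNIV G1" unfolding G1_def by (intro continuous_intros cdg)
  show ?thesis
  proof (cases "\<forall>v w. G1 v = G1 w")
    case False
    then obtain v1 v2 where ne: "G1 v1 \<noteq> G1 v2" by blast
    obtain v3 where v3: "G1 v3 = (G1 v1 + G1 v2)/2" using ivt_mid[OF cG1] by blast
    have d1: "G1 v1 \<noteq> G1 v3" "G1 v2 \<noteq> G1 v3" using ne v3 by auto
    show ?thesis
    proof (cases "\<exists>x0. B x0 \<noteq> 0")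
      case True
      then obtain x0 where B0: "B x0 \<noteq> 0" by blast
      have fc: "\<And>x. (f x)\<^sup>2 = (f x0)\<^sup>2"
      proof -
        fix x
        define p where "p = B x * K0 - B x0 * K0"
        define q where "q = B x0 * A x - B x * A x0 - 2 * B x * K0 * u x0 + 2 * B x0 * K0 * u x"
        define r where "r = B x * K0 * (u x0)\<^sup>2 - B x0 * K0 * (u x)\<^sup>2"
        have P: "p + q * G1 v + r * (G1 v)^2 = 0" for v
        proof -
          have e1: "A x * G1 v - B x * G2 v = K0 * (1 - u x * G1 v)\<^sup>2" by (rule key2)
          have e2: "A x0 * G1 v - B x0 * G2 v = K0 * (1 - u x0 * G1 v)\<^sup>2" by (rule key2)
          show ?thesis unfolding p_def q_def r_def using e1 e2 by algebra
        qed
        have "p = 0 \<and> q = 0 \<and> r = 0"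
          by (rule quad_zero[OF ne d1 P P P])
        hence "B x = B x0" "B x * K0 * (u x0)\<^sup>2 = B x0 * K0 * (u x)\<^sup>2"
          unfolding p_def r_def using assms(7) by auto
        hence "(u x0)\<^sup>2 = (u x)\<^sup>2" using B0 assms(7) by simp
        moreover have "u x0 \<ge> 0" "u x \<ge> 0" unfolding u_def by simp_all
        ultimately have "u x0 = u x" using power2_eq_iff_nonneg by metis
        thus "(f x)\<^sup>2 = (f x0)\<^sup>2" unfolding u_def by simp
      qed
      have "f x = f 0" for x by (rule sq_const_imp_const[OF cf fc])
      hence fe: "f = (\<lambda>_. f 0)" by auto
      have "deriv f x = 0" for x by (subst fe) (rule DERIV_imp_deriv[OF DERIV_const])
      hence "deriv f = (\<lambda>_. 0)" by (simp add: fun_eq_iff)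
      hence "B x0 = 0" unfolding B_def by simp
      with B0 show ?thesis by simp
    next
      case False
      hence B0: "\<And>x. B x = 0" by blast
      have P: "(- K0) + (A 0 + 2 * K0 * u 0) * G1 v + (- K0 * (u 0)\<^sup>2) * (G1 v)^2 = 0" for v
      proof -
        have e1: "A 0 * G1 v - B 0 * G2 v = K0 * (1 - u 0 * G1 v)\<^sup>2" by (rule key2)
        thus ?thesis using B0 by (simp add: algebra_simps power2_eq_square)
      qed
      have "- K0 = 0" using quad_zero[OF ne d1 P P P] by simp
      with assms(7) show ?thesis by simp
    qed
  next
    case True
    have "deriv g v = deriv g 0" for v
      by (rule sq_const_imp_const[OF cdg, of "G1 0"]) (use True G1_def in auto)
    define g0 where "g0 = deriv g 0"
    have dg: "deriv g = (\<lambda>_. g0)" using \<open>\<And>v. deriv g v = deriv g 0\<close> g0_def by auto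
    have ddg: "deriv (deriv g) = (\<lambda>_. 0)" by (simp add: dg)
    have keyf: "\<And>x. (deriv f x)\<^sup>2 * g0\<^sup>2 = K0 * (1 - (f x * g0)\<^sup>2)\<^sup>2"
      using key by (simp add: dg ddg)
    have g0: "g0 \<noteq> 0"
    proof
      assume "g0 = 0"
      with keyf[of 0] assms(7) show False by simp
    qed
    have posf: "\<And>x. 1 - (f x * g0)\<^sup>2 > 0" using pos dg by metis
    have K0pos: "K0 > 0"
    proof (rule ccontr)
      assume "\<not> K0 > 0"
      hence "K0 < 0" using assms(7) by simp
      moreover have "(1 - (f 0 * g0)\<^sup>2)\<^sup>2 > 0" using posf[of 0] by simp
      ultimately have "K0 * (1 - (f 0 * g0)\<^sup>2)\<^sup>2 < 0" by (simp add: mult_neg_pos)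
      moreover have "(deriv f 0)\<^sup>2 * g0\<^sup>2 \<ge> 0" by simp
      ultimately show False using keyf[of 0] by linarith
    qed
    have gaff: "g v = g0 * v + g 0" for v
    proof -
      have "\<forall>x. ((\<lambda>v. g v - g0 * v) has_real_derivative 0) (at x)"
      proof
        fix x
        have "((\<lambda>v. g v - g0 * v) has_real_derivative (deriv g x - g0)) (at x)"
          by (intro derivative_eq_intros) (auto intro: Dg)
        thus "((\<lambda>v. g v - g0 * v) has_real_derivative 0) (at x)" using dg by simp
      qed
      from DERIV_isconst_all[OF this, of v 0] show ?thesis by simp
    qed
    define h where "h x = f x * g0" for x
    define \<phi> where "\<phi> x = deriv f x * g0 / (1 - (h x)\<^sup>2)" for x
    have hd: "\<bar>h x\<bar> < 1" for x
    proof -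
      have "(h x)\<^sup>2 < 1" using posf[of x] unfolding h_def by simp
      thus ?thesis by (simp add: abs_square_less_1)
    qed
    have cphi: "continuous_on UNIV \<phi>" unfolding \<phi>_def h_def
      by (intro continuous_intros cdf cf) (use posf in \<open>metis less_irrefl\<close>)
    have sqphi: "(\<phi> x)\<^sup>2 = K0" for x
    proof -
      have "(\<phi> x)\<^sup>2 = (deriv f x)\<^sup>2 * g0\<^sup>2 / (1 - (h x)\<^sup>2)\<^sup>2"
        unfolding \<phi>_def by (simp add: power_divide power_mult_distrib)
      also have "\<dots> = K0" using keyf[of x] posf[of x] unfolding h_def by simp
      finally show ?thesis .
    qed
    define \<sigma> where "\<sigma> = \<phi> 0"
    have phic: "\<phi> x = \<sigma>" for x unfolding \<sigma>_def by (rule sq_const_imp_const[OF cphi sqphi])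
    define c where "c = artanh (h 0)"
    have at: "artanh (h x) = \<sigma> * x + c" for x
    proof -
      have "\<forall>y. ((\<lambda>x. artanh (h x) - \<sigma> * x) has_real_derivative 0) (at y)"
      proof
        fix y
        have d1: "(h has_real_derivative deriv f y * g0) (at y)"
          unfolding h_def[abs_def] by (rule DERIV_cmult_right[OF Df])
        have d2: "((\<lambda>x. artanh (h x)) has_real_derivative (1 / (1 - (h y)^2)) * (deriv f y * g0)) (at y)"
          by (rule DERIV_chain2[OF artanh_real_has_field_derivative[OF hd] d1])
        have d3: "((\<lambda>x. \<sigma> * x) has_real_derivative \<sigma>) (at y)"
          using DERIV_cmult_Id by blast
        have "((\<lambda>x. artanh (h x) - \<sigma> * x) has_real_derivative
               (1 / (1 - (h y)^2)) * (deriv f y * g0) - \<sigma>) (at y)"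
          by (rule DERIV_diff[OF d2 d3])
        moreover have "(1 / (1 - (h y)^2)) * (deriv f y * g0) - \<sigma> = 0"
          using phic[of y] unfolding \<phi>_def by simp
        ultimately show "((\<lambda>x. artanh (h x) - \<sigma> * x) has_real_derivative 0) (at y)" by simp
      qed
      from DERIV_isconst_all[OF this, of x 0] show ?thesis unfolding c_def by simp
    qed
    have hx: "h x = tanh (\<sigma> * x + c)" for x
      using tanh_artanh_real[OF hd[of x]] at[of x] by simp
    have sK: "sqrt K0 = \<bar>\<sigma>\<bar>" using sqphi[of 0] unfolding \<sigma>_def by (metis real_sqrt_abs)
    define s :: real where "s = (if \<sigma> \<ge> 0 then 1 else -1)"
    show ?thesis
    proof (intro exI conjI allI)
      show "g0 \<noteq> 0" by (rule g0)
      show "s = 1 \<or> s = -1" unfolding s_def by auto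
      fix x z
      have fx: "f x = tanh (\<sigma> * x + c) / g0" using hx[of x] g0 unfolding h_def by (simp add: field_simps)
      show "f x * g (z + a * x) = (g0 * (z + a * x) + g 0) *
          (s * (1 / g0) * tanh (sqrt K0 * x - s * g0 * (- c / g0)))"
      proof (cases "\<sigma> \<ge> 0")
        case True
        have e: "\<bar>\<sigma>\<bar> * x - 1 * g0 * (- c / g0) = \<sigma> * x + c" using True g0 by simp
        have s1: "s = 1" using True s_def by simp
        show ?thesis unfolding sK s1 e fx gaff[of "z + a * x"] by simp
      next
        case False
        have e: "\<bar>\<sigma>\<bar> * x - (-1) * g0 * (- c / g0) = - (\<sigma> * x + c)" using False g0 by simp
        have s1: "s = -1" using False s_def by simp
        show ?thesis unfolding sK s1 e fx gaff[of "z + a * x"] tanh_minus by simp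
      qed
    qed
  qed
qed

end
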